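(* Let $X$ be a proper geodesic metric space with base point $o$, and let $\epsilon\in(0,1)$. Let $\beta$ be a geodesic ray with $\beta(0)=o$ and let $\gamma$ be a $(q,Q)$-ray. Suppose there is an increasing sequence $r_1<r_2<\cdots$ with $r_n\to\infty$ such that $d(\beta(r_n),\gamma)\le\epsilon r_n$ for every $n$. Then $\gamma$ can be $(9q,Q)$-quasi-redirected to $\beta$.
   Context: A $(q,Q)$-quasi-geodesic satisfies $\frac{|s-t|}{q}-Q\le d(\alpha(s),\alpha(t))\le q|s-t|+Q$; a $(q,Q)$-ray is a $(q,Q)$-quasi-geodesic ray $\alpha\colon[0,\infty)\to X$ with $\alpha(0)=o$. A ray $\gamma'$ eventually coincides with $\beta$ if there are $t_\beta,t_{\gamma'}>0$ with $\gamma'(t)=\beta(t+t_\beta)$ for $t\ge t_{\gamma'}$. The ray $\gamma$ can be $(q',Q')$-quasi-redirected to $\beta$ if for every $r>0$ there is a $(q',Q')$-ray $\gamma'$ that coincides with $\gamma$ inside the closed ball of radius $r$ about $o$ (until $\gamma$ first leaves it) and eventually coincides with $\beta$. *)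

theory Defs
  imports "HOL-Analysis.Analysis"
begin

definition geodesic_space :: "('a::metric_space) itself \<Rightarrow> bool" where
  "geodesic_space _ \<longleftrightarrow>
     (\<forall>x y::'a. \<exists>g::real \<Rightarrow> 'a. g 0 = x \<and> g (dist x y) = y \<and>
        (\<forall>s\<in>{0..dist x y}. \<forall>t\<in>{0..dist x y}. dist (g s) (g t) = \<bar>s - t\<bar>))"

definition geodesic_ray :: "'a::metric_space \<Rightarrow> (real \<Rightarrow> 'a) \<Rightarrow> bool" where
  "geodesic_ray o' \<beta> \<longleftrightarrow> \<beta> 0 = o' \<and>
     (\<forall>s\<ge>0. \<forall>t\<ge>0. dist (\<beta> s) (\<beta> t) = \<bar>s - t\<bar>)"

definition quasi_ray :: "'a::metric_space \<Rightarrow> real \<Rightarrow> real \<Rightarrow> (real \<Rightarrow> 'a) \<Rightarrow> bool" where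
  "quasi_ray o' q Q \<alpha> \<longleftrightarrow> \<alpha> 0 = o' \<and>
     (\<forall>s\<ge>0. \<forall>t\<ge>0. \<bar>s - t\<bar> / q - Q \<le> dist (\<alpha> s) (\<alpha> t) \<and>
                    dist (\<alpha> s) (\<alpha> t) \<le> q * \<bar>s - t\<bar> + Q)"

definition eventually_coincides :: "(real \<Rightarrow> 'a) \<Rightarrow> (real \<Rightarrow> 'a) \<Rightarrow> bool" where
  "eventually_coincides \<gamma>' \<beta> \<longleftrightarrow>
     (\<exists>t\<^sub>\<beta> t\<^sub>\<gamma> :: real. t\<^sub>\<beta> > 0 \<and> t\<^sub>\<gamma> > 0 \<and> (\<forall>t\<ge>t\<^sub>\<gamma>. \<gamma>' t = \<beta> (t + t\<^sub>\<beta>)))"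

definition coincides_in_ball :: "'a::metric_space \<Rightarrow> real \<Rightarrow> (real \<Rightarrow> 'a) \<Rightarrow> (real \<Rightarrow> 'a) \<Rightarrow> bool" where
  "coincides_in_ball o' r \<gamma>' \<gamma> \<longleftrightarrow>
     (\<forall>t\<ge>0. \<gamma> ` {0..t} \<subseteq> cball o' r \<longrightarrow> \<gamma>' t = \<gamma> t)"

definition quasi_redirected :: "'a::metric_space \<Rightarrow> real \<Rightarrow> real \<Rightarrow> (real \<Rightarrow> 'a) \<Rightarrow> (real \<Rightarrow> 'a) \<Rightarrow> bool" where
  "quasi_redirected o' q' Q' \<gamma> \<beta> \<longleftrightarrow>
     (\<forall>r>0. \<exists>\<gamma>'. quasi_ray o' q' Q' \<gamma>' \<and> coincides_in_ball o' r \<gamma>' \<gamma> \<and>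
                 eventually_coincides \<gamma>' \<beta>)"

end

theory Submission
  imports Defs
begin

lemma div9q: fixes z q :: real assumes "z \<ge> 0" "q \<ge> 1" shows "z/(9*q) \<le> z/9"
  using divide_left_mono[of 9 "9*q" z] assms by simp

lemma AL12: fixes a u q Q x :: real
  assumes "q \<ge> 1" "Q \<ge> 0" "a \<ge> 0" "u \<ge> 0" "x \<ge> a/q - Q - u" "x \<ge> u - Q"
  shows "x \<ge> (a + u/2)/(9*q) - Q"
proof -
  define B where "B = a/q"
  have "(a + u/2)/(9*q) = B/9 + (u/2)/(9*q)" using assms unfolding B_def by (simp add: field_simps)
  moreover have "(u/2)/(9*q) \<le> (u/2)/9" using div9q[of "u/2" q] assms by simp
  moreover have "B \<ge> 0" using assms unfolding B_def by simp
  moreover have "x \<ge> B - Q - u" using assms unfolding B_def by simp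
  ultimately show ?thesis using assms by linarith
qed

lemma AL13: fixes a D v q Q x :: real
  assumes "q \<ge> 1" "Q \<ge> 0" "a \<ge> 0" "D \<ge> 0" "v \<ge> 0" "x \<ge> a/q - Q - (D+v)" "x \<ge> D + v/2 - Q"
  shows "x \<ge> (a + D/2 + v)/(9*q) - Q"
proof -
  define B where "B = a/q"
  have "(a + D/2 + v)/(9*q) = B/9 + (D/2+v)/(9*q)" using assms unfolding B_def by (simp add: field_simps)
  moreover have "(D/2+v)/(9*q) \<le> (D/2+v)/9" using div9q[of "D/2+v" q] assms by simp
  moreover have "(D/2+v)/9 = D/18 + v/9" by simp
  moreover have "B \<ge> 0" using assms unfolding B_def by simp
  moreover have "x \<ge> B - Q - (D+v)" using assms unfolding B_def by simp
  ultimately show ?thesis using assms by linarith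
qed

lemma AL23: fixes w v q Q x :: real
  assumes "q \<ge> 1" "w \<ge> 0" "v \<ge> 0" "x \<ge> w + v/2 - Q"
  shows "x \<ge> (w/2 + v)/(9*q) - Q"
proof -
  have "(w/2+v)/(9*q) \<le> (w/2+v)/9" using div9q[of "w/2+v" q] assms by simp
  moreover have "(w/2+v)/9 = w/18 + v/9" by simp
  ultimately show ?thesis using assms by linarith
qed

lemma U: fixes a u q Q x :: real
  assumes "q \<ge> 1" "a \<ge> 0" "u \<ge> 0" "x \<le> q*a + Q + u"
  shows "x \<le> 9*q*(a + u/2) + Q"
proof -
  have "q*u \<ge> u" using assms mult_right_mono[of 1 q u] by simp
  moreover have "q*a \<ge> 0" using assms by simp
  moreover have "9*q*(a + u/2) = 9*(q*a) + 9/2*(q*u)" by (simp add: algebra_simps)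
  ultimately show ?thesis using assms by linarith
qed

lemma weak: fixes d q Q z :: real
  assumes "q \<ge> 1" "z \<ge> 0" "z/q - Q \<le> d" "d \<le> q*z + Q"
  shows "z/(9*q) - Q \<le> d \<and> d \<le> 9*q*z + Q"
proof
  have "z/(9*q) \<le> z/q" using assms by (simp add: frac_le)
  then show "z/(9*q) - Q \<le> d" using assms by linarith
  have "q*z \<le> 9*q*z" using assms by simp
  then show "d \<le> 9*q*z + Q" using assms by linarith
qed

lemma lin_up: fixes x z q Q :: real
  assumes "q \<ge> 1" "z \<ge> 0" "Q \<ge> 0" "x \<le> 2*z" shows "x \<le> 9*q*z + Q"
proof -
  have "z \<le> q*z" using assms mult_right_mono[of 1 q z] by simp
  then show ?thesis using assms by linarith
qed

lemma lin_low: fixes x z q Q :: real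
  assumes "q \<ge> 1" "z \<ge> 0" "Q \<ge> 0" "x \<ge> z" shows "x \<ge> z/(9*q) - Q"
proof -
  have "z/(9*q) \<le> z/9" using div9q assms by simp
  then show ?thesis using assms by linarith
qed

lemma lip_cont:
  fixes f :: "real \<Rightarrow> 'a::metric_space" and L :: real
  assumes "L > 0" "\<And>s t. s \<ge> 0 \<Longrightarrow> t \<ge> 0 \<Longrightarrow> dist (f s) (f t) \<le> L * \<bar>s - t\<bar>"
  shows "continuous_on {0..} f"
proof (rule lipschitz_on_continuous_on, rule lipschitz_onI)
  show "0 \<le> L" using assms by simp
  fix x y :: real assume "x \<in> {0..}" "y \<in> {0..}"
  then show "dist (f x) (f y) \<le> L * dist x y" using assms(2) by (simp add: dist_real_def)
qed

lemma near_min: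
  fixes f :: "real \<Rightarrow> real \<Rightarrow> real" and Q T A M :: real
  assumes Q: "Q \<ge> 0" and T: "T \<ge> 0"
    and lb: "\<And>t \<rho>. 0 \<le> t \<Longrightarrow> t \<le> T \<Longrightarrow> A \<le> \<rho> \<Longrightarrow> \<rho>/2 - M \<le> f t \<rho>"
    and cont: "Q = 0 \<Longrightarrow> continuous_on ({0..T} \<times> {A..}) (\<lambda>p. f (fst p) (snd p))"
  shows "\<exists>t0 \<rho>0. 0 \<le> t0 \<and> t0 \<le> T \<and> A \<le> \<rho>0 \<and>
           (\<forall>t \<rho>. 0 \<le> t \<longrightarrow> t \<le> T \<longrightarrow> A \<le> \<rho> \<longrightarrow> f t0 \<rho>0 \<le> f t \<rho> + Q)"
proof -
  define S where "S = {0..T} \<times> {A..}"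
  define F where "F = (\<lambda>p. f (fst p) (snd p))"
  show ?thesis
  proof (cases "Q = 0")
    case False
    then have Qp: "Q > 0" using Q by simp
    have ne: "S \<noteq> {}" using T unfolding S_def by auto
    have bdd: "bdd_below (F ` S)"
      unfolding bdd_below_def
    proof (intro exI[of _ "A/2 - M"] ballI)
      fix x assume "x \<in> F ` S"
      then obtain p where p: "p \<in> S" "x = F p" by auto
      then have "snd p/2 - M \<le> x" using lb[of "fst p" "snd p"] unfolding S_def F_def by auto
      moreover have "A \<le> snd p" using p unfolding S_def by auto
      ultimately show "A/2 - M \<le> x" by linarith
    qed
    have "(INF p\<in>S. F p) < (INF p\<in>S. F p) + Q" using Qp by simp
    then obtain p where p: "p \<in> S" "F p < (INF p\<in>S. F p) + Q"
      using cINF_less_iff[OF ne bdd] by blast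
    have "0 \<le> fst p \<and> fst p \<le> T \<and> A \<le> snd p" using p unfolding S_def by auto
    moreover have "\<forall>t \<rho>. 0 \<le> t \<longrightarrow> t \<le> T \<longrightarrow> A \<le> \<rho> \<longrightarrow> f (fst p) (snd p) \<le> f t \<rho> + Q"
    proof (intro allI impI)
      fix t \<rho> assume "0 \<le> t" "t \<le> T" "A \<le> \<rho>"
      then have "(t, \<rho>) \<in> S" unfolding S_def by auto
      then have "(INF p\<in>S. F p) \<le> F (t, \<rho>)" using cINF_lower[OF bdd] by blast
      then show "f (fst p) (snd p) \<le> f t \<rho> + Q" using p unfolding F_def by simp
    qed
    ultimately show ?thesis by blast
  next
    case True
    define A2 where "A2 = max A (2*(f 0 A + M))"
    define K where "K = {0..T} \<times> {A..A2}"
    have cK: "compact K" unfolding K_def by (intro compact_Times compact_Icc)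
    have neK: "K \<noteq> {}" using T by (auto simp: K_def A2_def)
    have "continuous_on K F" using cont[OF True] unfolding F_def
      by (rule continuous_on_subset) (auto simp: K_def)
    then obtain p where p: "p \<in> K" "\<And>x. x \<in> K \<Longrightarrow> F p \<le> F x"
      using continuous_attains_inf[OF cK neK] by blast
    have pA: "F p \<le> f 0 A" using p(2)[of "(0, A)"] T by (auto simp: K_def A2_def F_def)
    have "0 \<le> fst p \<and> fst p \<le> T \<and> A \<le> snd p" using p unfolding K_def by auto
    moreover have "\<forall>t \<rho>. 0 \<le> t \<longrightarrow> t \<le> T \<longrightarrow> A \<le> \<rho> \<longrightarrow> f (fst p) (snd p) \<le> f t \<rho> + Q"
    proof (intro allI impI)
      fix t \<rho> assume t: "0 \<le> t" "t \<le> T" and r: "A \<le> \<rho>"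
      show "f (fst p) (snd p) \<le> f t \<rho> + Q"
      proof (cases "\<rho> \<le> A2")
        case True
        then have "(t, \<rho>) \<in> K" using t r unfolding K_def by auto
        then show ?thesis using p(2)[of "(t, \<rho>)"] \<open>Q = 0\<close> unfolding F_def by simp
      next
        case False
        have "\<rho>/2 - M \<le> f t \<rho>" using lb t r by simp
        moreover have "2*(f 0 A + M) \<le> A2" unfolding A2_def by simp
        ultimately show ?thesis using pA False \<open>Q = 0\<close> unfolding F_def by simp
      qed
    qed
    ultimately show ?thesis by blast
  qed
qed

lemma qr_from_le:
  fixes p :: "real \<Rightarrow> 'a::metric_space"
  assumes "p 0 = o'"
    and "\<And>s t. 0 \<le> s \<Longrightarrow> s \<le> t \<Longrightarrow>
           (t - s)/q' - Q' \<le> dist (p s) (p t) \<and> dist (p s) (p t) \<le> q' * (t - s) + Q'"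
  shows "quasi_ray o' q' Q' p"
  unfolding quasi_ray_def
proof (intro conjI allI impI)
  show "p 0 = o'" by fact
  fix s t :: real assume s: "s \<ge> 0" and t: "t \<ge> 0"
  have "\<bar>s - t\<bar>/q' - Q' \<le> dist (p s) (p t) \<and> dist (p s) (p t) \<le> q' * \<bar>s - t\<bar> + Q'"
  proof (cases "s \<le> t")
    case True
    then have "\<bar>s - t\<bar> = t - s" by simp
    then show ?thesis using assms(2)[OF s True] by simp
  next
    case False
    then have ts: "t \<le> s" by (simp add: field_simps)
    then have "\<bar>s - t\<bar> = s - t" by simp
    then show ?thesis using assms(2)[OF t ts] by (simp add: dist_commute)
  qed
  then show "\<bar>s - t\<bar>/q' - Q' \<le> dist (p s) (p t)" "dist (p s) (p t) \<le> q' * \<bar>s - t\<bar> + Q'"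
    by auto
qed


theorem mainTheorem4:
  fixes o' :: "'a::heine_borel"
    and \<beta> \<gamma> :: "real \<Rightarrow> 'a"
    and q Q \<epsilon> :: real
    and r :: "nat \<Rightarrow> real"
  assumes "geodesic_space TYPE('a)"
    and "0 < \<epsilon>" and "\<epsilon> < 1"
    and "geodesic_ray o' \<beta>"
    and "quasi_ray o' q Q \<gamma>"
    and "strict_mono r"
    and "\<And>n. 0 \<le> r n"
    and "filterlim r at_top sequentially"
    and "\<And>n. infdist (\<beta> (r n)) (\<gamma> ` {0..}) \<le> \<epsilon> * r n"
  shows "quasi_redirected o' (9 * q) Q \<gamma> \<beta>"
proof -
  have geo: "\<And>x y::'a. \<exists>g::real \<Rightarrow> 'a. g 0 = x \<and> g (dist x y) = y \<and>
        (\<forall>s\<in>{0..dist x y}. \<forall>t\<in>{0..dist x y}. dist (g s) (g t) = \<bar>s - t\<bar>)"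
    using assms(1) unfolding geodesic_space_def by blast
  have g0: "\<gamma> 0 = o'" using assms(5) unfolding quasi_ray_def by blast
  have qr: "\<And>s t. s \<ge> 0 \<Longrightarrow> t \<ge> 0 \<Longrightarrow> \<bar>s - t\<bar>/q - Q \<le> dist (\<gamma> s) (\<gamma> t) \<and>
              dist (\<gamma> s) (\<gamma> t) \<le> q * \<bar>s - t\<bar> + Q"
    using assms(5) unfolding quasi_ray_def by blast
  have b0: "\<beta> 0 = o'" using assms(4) unfolding geodesic_ray_def by blast
  have bi: "\<And>s t. s \<ge> 0 \<Longrightarrow> t \<ge> 0 \<Longrightarrow> dist (\<beta> s) (\<beta> t) = \<bar>s - t\<bar>"
    using assms(4) unfolding geodesic_ray_def by blast
  have bo: "\<And>s. s \<ge> 0 \<Longrightarrow> dist o' (\<beta> s) = s" using bi[of 0] b0 by simp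
  have Q0: "Q \<ge> 0" using qr[of 0 0] by simp
  have eps1: "1 - \<epsilon> > 0" using assms(3) by simp
  have rl: "\<exists>n. K \<le> (1 - \<epsilon>) * r n" for K
  proof -
    have "\<forall>\<^sub>F n in sequentially. K / (1 - \<epsilon>) \<le> r n"
      using assms(8) unfolding filterlim_at_top by blast
    then obtain n where "K / (1 - \<epsilon>) \<le> r n" unfolding eventually_sequentially by blast
    then have "K \<le> (1 - \<epsilon>) * r n" using eps1 by (simp add: divide_le_eq mult.commute)
    then show ?thesis by blast
  qed
  have inf_lb: "c \<le> infdist x (\<gamma> ` {0..})" if "\<And>t. t \<ge> 0 \<Longrightarrow> c \<le> dist x (\<gamma> t)" for c x
  proof -
    have ne: "\<gamma> ` {0..} \<noteq> {}" by auto
    show ?thesis unfolding infdist_notempty[OF ne]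
      by (rule cINF_greatest) (use that in auto)
  qed
  have qpos: "q > 0"
  proof (rule ccontr)
    assume "\<not> q > 0"
    then have qn: "q \<le> 0" by simp
    have bnd: "dist o' (\<gamma> t) \<le> Q" if "t \<ge> 0" for t
    proof -
      have "dist (\<gamma> 0) (\<gamma> t) \<le> q * \<bar>0 - t\<bar> + Q" using qr[of 0 t] that by blast
      moreover have "q * \<bar>0 - t\<bar> \<le> 0" using qn by (simp add: mult_nonpos_nonneg)
      ultimately show ?thesis using g0 by simp
    qed
    obtain n where n: "Q + 1 \<le> (1 - \<epsilon>) * r n" using rl by blast
    have "r n - Q \<le> infdist (\<beta> (r n)) (\<gamma> ` {0..})"
    proof (rule inf_lb)
      fix t :: real assume "t \<ge> 0"
      have "dist o' (\<beta> (r n)) \<le> dist o' (\<gamma> t) + dist (\<gamma> t) (\<beta> (r n))" by (rule dist_triangle)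
      then show "r n - Q \<le> dist (\<beta> (r n)) (\<gamma> t)" using bnd[OF \<open>t\<ge>0\<close>] bo[OF assms(7)]
        by (simp add: dist_commute)
    qed
    then have "r n - Q \<le> \<epsilon> * r n" using assms(9)[of n] by linarith
    then show False using n by (simp add: algebra_simps)
  qed
  have q1: "q \<ge> 1"
  proof (rule ccontr)
    assume "\<not> q \<ge> 1"
    then have qlt: "q < 1" by simp
    define c where "c = 1/q - q"
    have "1/q > 1" using qpos qlt by simp
    then have cpos: "c > 0" unfolding c_def using qlt by simp
    define t where "t = (2*Q + 1)/c"
    have t0: "t \<ge> 0" unfolding t_def using cpos Q0 by simp
    have "\<bar>0 - t\<bar>/q - Q \<le> q * \<bar>0 - t\<bar> + Q" using qr[of 0 t] t0 by linarith
    then have "t/q - Q \<le> q*t + Q" using t0 by simp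
    moreover have "t/q - q*t = c*t" unfolding c_def by (simp add: algebra_simps)
    moreover have "c*t = 2*Q + 1" unfolding t_def using cpos by simp
    ultimately show False by linarith
  qed
  show ?thesis
    unfolding quasi_redirected_def
  proof (intro allI impI)
    fix R0 :: real assume R0: "R0 > 0"
    obtain n where n: "R0 + Q + 2 \<le> (1 - \<epsilon>) * r n" using rl by blast
    have rn0: "r n \<ge> 0" using assms(7) by simp
    have "infdist (\<beta> (r n)) (\<gamma> ` {0..}) < \<epsilon> * r n + 1" using assms(9)[of n] by linarith
    then obtain t1 where t1: "t1 \<ge> 0" "dist (\<beta> (r n)) (\<gamma> t1) < \<epsilon> * r n + 1"
    proof -
      have ne: "\<gamma> ` {0..} \<noteq> {}" by auto
      have bdd: "bdd_below ((\<lambda>a. dist (\<beta> (r n)) a) ` (\<gamma> ` {0..}))"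
        by (rule bdd_belowI[of _ 0]) auto
      assume h: "\<And>t1. t1 \<ge> 0 \<Longrightarrow> dist (\<beta> (r n)) (\<gamma> t1) < \<epsilon> * r n + 1 \<Longrightarrow> thesis"
      assume "infdist (\<beta> (r n)) (\<gamma> ` {0..}) < \<epsilon> * r n + 1"
      then obtain a where "a \<in> \<gamma> ` {0..}" "dist (\<beta> (r n)) a < \<epsilon> * r n + 1"
        unfolding infdist_notempty[OF ne] using cINF_less_iff[OF ne bdd] by blast
      then show thesis using h by auto
    qed
    define T where "T = t1"
    define M where "M = q*T + Q"
    have Mb: "dist o' (\<gamma> t) \<le> M" if "0 \<le> t" "t \<le> T" for t
    proof -
      have "dist (\<gamma> 0) (\<gamma> t) \<le> q * \<bar>0 - t\<bar> + Q" using qr[of 0 t] that by blast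
      moreover have "q * \<bar>0 - t\<bar> \<le> q*T" using that qpos by simp
      ultimately show ?thesis using g0 unfolding M_def by simp
    qed
    define A where "A = max (r n) (2*T + M + 1)"
    define H where "H = (\<lambda>t \<rho>. dist (\<gamma> t) (\<beta> \<rho>) - \<rho>/2)"
    have A0: "A \<ge> 0" unfolding A_def using rn0 by simp
    have lb: "\<rho>/2 - M \<le> H t \<rho>" if "0 \<le> t" "t \<le> T" "A \<le> \<rho>" for t \<rho>
    proof -
      have "dist o' (\<beta> \<rho>) \<le> dist o' (\<gamma> t) + dist (\<gamma> t) (\<beta> \<rho>)" by (rule dist_triangle)
      then show ?thesis using Mb[OF that(1,2)] bo[of \<rho>] that A0 unfolding H_def by simp
    qed
    have cont: "continuous_on ({0..T} \<times> {A..}) (\<lambda>p. H (fst p) (snd p))" if "Q = 0"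
    proof -
      have cg: "continuous_on {0..} \<gamma>"
        by (rule lip_cont[OF qpos]) (use qr that in auto)
      have cb: "continuous_on {0..} \<beta>"
        by (rule lip_cont[of 1]) (use bi in auto)
      have c1: "continuous_on ({0..T} \<times> {A..}) (\<lambda>p. \<gamma> (fst p))"
        by (rule continuous_on_compose2[OF cg continuous_on_fst[OF continuous_on_id]]) auto
      have c2: "continuous_on ({0..T} \<times> {A..}) (\<lambda>p. \<beta> (snd p))"
        by (rule continuous_on_compose2[OF cb continuous_on_snd[OF continuous_on_id]]) (use A0 in auto)
      show ?thesis unfolding H_def
        by (intro continuous_intros c1 c2) auto
    qed
    have T0: "T \<ge> 0" unfolding T_def using t1 by simp
    obtain t0 \<rho> where t0: "0 \<le> t0" "t0 \<le> T" and \<rho>A: "A \<le> \<rho>"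
      and Hm: "\<And>t \<rho>'. 0 \<le> t \<Longrightarrow> t \<le> T \<Longrightarrow> A \<le> \<rho>' \<Longrightarrow> H t0 \<rho> \<le> H t \<rho>' + Q"
      using near_min[of Q T A M H, OF Q0 T0 lb cont] by blast
    define y where "y = \<gamma> t0"
    define D where "D = dist y (\<beta> \<rho>)"
    obtain g where g0': "g 0 = y" and gD: "g D = \<beta> \<rho>"
      and gi: "\<And>s t. s \<in> {0..D} \<Longrightarrow> t \<in> {0..D} \<Longrightarrow> dist (g s) (g t) = \<bar>s - t\<bar>"
      using geo[of y "\<beta> \<rho>"] unfolding D_def by blast
    have \<rho>0: "\<rho> \<ge> 0" "\<rho> \<ge> r n" "\<rho> \<ge> 2*T + M + 1" using \<rho>A A0 unfolding A_def by auto
    have D0: "D \<ge> 0" unfolding D_def by simp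
    have DM: "D \<le> \<rho> + M"
    proof -
      have "D \<le> dist y o' + dist o' (\<beta> \<rho>)" unfolding D_def by (rule dist_triangle)
      then show ?thesis using Mb[OF t0] bo[OF \<rho>0(1)] unfolding y_def by (simp add: dist_commute)
    qed
    have Hm': "D + (\<rho>' - \<rho>)/2 - Q \<le> dist (\<gamma> t) (\<beta> \<rho>')" if "0 \<le> t" "t \<le> T" "\<rho> \<le> \<rho>'" for t \<rho>'
    proof -
      have Ar: "A \<le> \<rho>'" using that \<rho>A by linarith
      have e: "(\<rho>' - \<rho>)/2 = \<rho>'/2 - \<rho>/2" by simp
      from Hm[OF that(1,2) Ar] show ?thesis unfolding H_def D_def y_def e by linarith
    qed
    have yfar: "dist o' y > R0"
    proof -
      have "D \<le> dist (\<gamma> t1) (\<beta> \<rho>) + Q" using Hm'[of t1 \<rho>] t1 unfolding T_def by simp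
      moreover have "dist (\<gamma> t1) (\<beta> \<rho>) \<le> dist (\<gamma> t1) (\<beta> (r n)) + dist (\<beta> (r n)) (\<beta> \<rho>)"
        by (rule dist_triangle)
      moreover have "dist (\<beta> (r n)) (\<beta> \<rho>) = \<rho> - r n" using bi[of "r n" \<rho>] rn0 \<rho>0 by simp
      moreover have "dist o' (\<beta> \<rho>) \<le> dist o' y + D" unfolding D_def by (rule dist_triangle)
      ultimately show ?thesis using bo[OF \<rho>0(1)] t1(2) n by (simp add: dist_commute algebra_simps)
    qed
    define \<gamma>' where "\<gamma>' = (\<lambda>t. if t \<le> t0 then \<gamma> t else if t \<le> t0 + D/2 then g (2*(t - t0))
                           else \<beta> (\<rho> + (t - t0 - D/2)))"
    show "\<exists>\<gamma>'. quasi_ray o' (9 * q) Q \<gamma>' \<and> coincides_in_ball o' R0 \<gamma>' \<gamma> \<and> eventually_coincides \<gamma>' \<beta>"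
    proof (intro exI[of _ \<gamma>'] conjI)
      show "eventually_coincides \<gamma>' \<beta>"
        unfolding eventually_coincides_def
      proof (rule exI[of _ "\<rho> - t0 - D/2"], rule exI[of _ "t0 + D/2 + 1"], intro conjI allI impI)
        show "\<rho> - t0 - D/2 > 0" using DM t0 \<rho>0 by linarith
        show "t0 + D/2 + 1 > 0" using t0 D0 by linarith
        fix t assume "t0 + D/2 + 1 \<le> t"
        then show "\<gamma>' t = \<beta> (t + (\<rho> - t0 - D/2))" unfolding \<gamma>'_def using D0
          by (simp add: algebra_simps)
      qed
      show "coincides_in_ball o' R0 \<gamma>' \<gamma>"
        unfolding coincides_in_ball_def
      proof (intro allI impI)
        fix t assume t: "t \<ge> 0" "\<gamma> ` {0..t} \<subseteq> cball o' R0"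
        have "t \<le> t0"
        proof (rule ccontr)
          assume "\<not> t \<le> t0"
          then have "y \<in> \<gamma> ` {0..t}" using t0 unfolding y_def by auto
          then show False using t(2) yfar by auto
        qed
        then show "\<gamma>' t = \<gamma> t" unfolding \<gamma>'_def by simp
      qed
      show "quasi_ray o' (9 * q) Q \<gamma>'"
      proof (rule qr_from_le)
        show "\<gamma>' 0 = o'" unfolding \<gamma>'_def using t0 g0 by simp
        fix s t :: real assume s: "0 \<le> s" and st: "s \<le> t"
        have gy: "dist y (g u) = u" if "0 \<le> u" "u \<le> D" for u
          using gi[of 0 u] that g0' by simp
        have gb: "dist (g u) (\<beta> \<rho>) = D - u" if "0 \<le> u" "u \<le> D" for u
          using gi[of u D] that gD by simp
        have bb: "dist (\<beta> \<rho>) (\<beta> (\<rho> + v)) = v" if "0 \<le> v" for v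
          using bi[of \<rho> "\<rho> + v"] that \<rho>0 by simp
        have yb: "dist y (\<beta> (\<rho> + v)) \<le> D + v" if "0 \<le> v" for v
        proof -
          have "dist y (\<beta> (\<rho> + v)) \<le> dist y (\<beta> \<rho>) + dist (\<beta> \<rho>) (\<beta> (\<rho> + v))" by (rule dist_triangle)
          then show ?thesis using bb[OF that] unfolding D_def by simp
        qed
        show "(t - s)/(9*q) - Q \<le> dist (\<gamma>' s) (\<gamma>' t) \<and> dist (\<gamma>' s) (\<gamma>' t) \<le> 9*q*(t - s) + Q"
        proof (cases "s \<le> t0")
          case sA: True
          define a where "a = t0 - s"
          have a0: "a \<ge> 0" using sA unfolding a_def by simp
          have sT: "s \<le> T" using sA t0 by simp
          have gsy: "a/q - Q \<le> dist (\<gamma> s) y" "dist (\<gamma> s) y \<le> q*a + Q"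
          proof -
            have "\<bar>s - t0\<bar> = t0 - s" using sA by simp
            then show "a/q - Q \<le> dist (\<gamma> s) y" "dist (\<gamma> s) y \<le> q*a + Q"
              using qr[of s t0] s t0 unfolding a_def y_def by auto
          qed
          have gs': "\<gamma>' s = \<gamma> s" unfolding \<gamma>'_def using sA by simp
          show ?thesis
          proof (cases "t \<le> t0")
            case True
            then have "\<gamma>' t = \<gamma> t" unfolding \<gamma>'_def by simp
            moreover have "\<bar>s - t\<bar> = t - s" using st by simp
            ultimately show ?thesis using weak[OF q1, of "t - s" Q "dist (\<gamma> s) (\<gamma> t)"] qr[of s t] s st gs'
              by auto
          next
            case tA: False
            show ?thesis
            proof (cases "t \<le> t0 + D/2")
              case True
              define u where "u = 2*(t - t0)"
              have u: "0 \<le> u" "u \<le> D" using tA True unfolding u_def by auto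
              have gt': "\<gamma>' t = g u" unfolding \<gamma>'_def u_def using tA True by simp
              have ts: "t - s = a + u/2" unfolding a_def u_def by (simp add: field_simps)
              define x where "x = dist (\<gamma> s) (g u)"
              have x1: "x \<ge> a/q - Q - u"
              proof -
                have "dist (\<gamma> s) y \<le> x + dist (g u) y" unfolding x_def by (rule dist_triangle)
                then show ?thesis using gsy gy[OF u] by (simp add: dist_commute)
              qed
              have x2: "x \<ge> u - Q"
              proof -
                have "dist (\<gamma> s) (\<beta> \<rho>) \<le> x + dist (g u) (\<beta> \<rho>)" unfolding x_def by (rule dist_triangle)
                moreover have "D - Q \<le> dist (\<gamma> s) (\<beta> \<rho>)" using Hm'[of s \<rho>] s sT by simp
                ultimately show ?thesis using gb[OF u] by simp
              qed
              have x3: "x \<le> q*a + Q + u"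
              proof -
                have "x \<le> dist (\<gamma> s) y + dist y (g u)" unfolding x_def by (rule dist_triangle)
                then show ?thesis using gsy gy[OF u] by simp
              qed
              show ?thesis unfolding gs' gt' ts x_def[symmetric]
                using AL12[OF q1 Q0 a0 u(1) x1 x2] U[OF q1 a0 u(1) x3] by simp
            next
              case tB: False
              define v where "v = t - t0 - D/2"
              have v0: "v \<ge> 0" using tB unfolding v_def by simp
              have gt': "\<gamma>' t = \<beta> (\<rho> + v)" unfolding \<gamma>'_def v_def using tA tB by simp
              have ts: "t - s = a + D/2 + v" unfolding a_def v_def by (simp add: field_simps)
              define x where "x = dist (\<gamma> s) (\<beta> (\<rho> + v))"
              have x1: "x \<ge> a/q - Q - (D + v)"
              proof -
                have "dist (\<gamma> s) y \<le> x + dist (\<beta> (\<rho> + v)) y" unfolding x_def by (rule dist_triangle)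
                then show ?thesis using gsy yb[OF v0] by (simp add: dist_commute)
              qed
              have x2: "x \<ge> D + v/2 - Q" using Hm'[of s "\<rho> + v"] s sT v0 unfolding x_def by simp
              have x3: "x \<le> q*a + Q + (D + 2 * v)"
              proof -
                have "x \<le> dist (\<gamma> s) y + dist y (\<beta> (\<rho> + v))" unfolding x_def by (rule dist_triangle)
                then show ?thesis using gsy yb[OF v0] v0 by simp
              qed
              have "x \<le> 9*q*(a + (D + 2 * v)/2) + Q" using U[OF q1 a0 _ x3] D0 v0 by simp
              moreover have "a + (D + 2 * v)/2 = a + D/2 + v" by simp
              ultimately show ?thesis unfolding gs' gt' ts x_def[symmetric]
                using AL13[OF q1 Q0 a0 D0 v0 x1 x2] by simp
            qed
          qed
        next
          case sB: False
          then have tA: "\<not> t \<le> t0" using st by simp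
          show ?thesis
          proof (cases "s \<le> t0 + D/2")
            case sC: True
            define u where "u = 2*(s - t0)"
            have u: "0 \<le> u" "u \<le> D" using sB sC unfolding u_def by auto
            have gs': "\<gamma>' s = g u" unfolding \<gamma>'_def u_def using sB sC by simp
            show ?thesis
            proof (cases "t \<le> t0 + D/2")
              case True
              define u' where "u' = 2*(t - t0)"
              have u': "0 \<le> u'" "u' \<le> D" using tA True unfolding u'_def by auto
              have gt': "\<gamma>' t = g u'" unfolding \<gamma>'_def u'_def using tA True by simp
              have d: "dist (\<gamma>' s) (\<gamma>' t) = 2*(t - s)"
                unfolding gs' gt' using gi[of u u'] u u' st unfolding u_def u'_def by simp
              show ?thesis unfolding d using lin_up[OF q1 _ Q0, of "t - s" "2*(t-s)"]
                  lin_low[OF q1 _ Q0, of "t - s" "2*(t-s)"] st by simp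
            next
              case tB: False
              define v where "v = t - t0 - D/2"
              have v0: "v \<ge> 0" using tB unfolding v_def by simp
              have gt': "\<gamma>' t = \<beta> (\<rho> + v)" unfolding \<gamma>'_def v_def using tA tB by simp
              define w where "w = D - u"
              have w0: "w \<ge> 0" using u unfolding w_def by simp
              have ts: "t - s = w/2 + v" unfolding w_def v_def u_def by (simp add: field_simps)
              define x where "x = dist (g u) (\<beta> (\<rho> + v))"
              have x1: "x \<ge> w + v/2 - Q"
              proof -
                have "dist y (\<beta> (\<rho> + v)) \<le> dist y (g u) + x" unfolding x_def by (rule dist_triangle)
                moreover have "D + v/2 - Q \<le> dist y (\<beta> (\<rho> + v))"
                  using Hm'[of t0 "\<rho> + v"] t0 v0 unfolding y_def by simp
                ultimately show ?thesis using gy[OF u] unfolding w_def by simp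
              qed
              have x2: "x \<le> w + v"
              proof -
                have "x \<le> dist (g u) (\<beta> \<rho>) + dist (\<beta> \<rho>) (\<beta> (\<rho> + v))" unfolding x_def by (rule dist_triangle)
                then show ?thesis using gb[OF u] bb[OF v0] unfolding w_def by simp
              qed
              have "x \<le> 9*q*(w/2 + v) + Q" using lin_up[OF q1 _ Q0, of "w/2+v" x] x2 w0 v0 by simp
              then show ?thesis unfolding gs' gt' ts x_def[symmetric]
                using AL23[OF q1 w0 v0 x1] by simp
            qed
          next
            case sD: False
            then have tD: "\<not> t \<le> t0 + D/2" using st by simp
            have gs': "\<gamma>' s = \<beta> (\<rho> + (s - t0 - D/2))" unfolding \<gamma>'_def using sB sD by simp
            have gt': "\<gamma>' t = \<beta> (\<rho> + (t - t0 - D/2))" unfolding \<gamma>'_def using tA tD by simp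
            have d: "dist (\<gamma>' s) (\<gamma>' t) = t - s"
              unfolding gs' gt' using bi[of "\<rho> + (s - t0 - D/2)" "\<rho> + (t - t0 - D/2)"] sD tD st \<rho>0 by simp
            show ?thesis unfolding d using lin_up[OF q1 _ Q0, of "t - s" "t - s"]
                lin_low[OF q1 _ Q0, of "t - s" "t - s"] st by simp
          qed
        qed
      qed
    qed
  qed
qed

end
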